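(* Let $\Lambda$ be an artin algebra and let $f: X\to Y$ and $f': X'\to Y$ be epimorphisms of $\Lambda$-modules with $f=f'h$ for some $h: X\to X'$. Let $K=\operatorname{Ker} f$, $K'=\operatorname{Ker} f'$ and let $h': K\to K'$ be the restriction of $h$, so that there is a commutative diagram with exact rows $0\to K\to X\to Y\to 0$ and $0\to K'\to X'\to Y\to 0$ with vertical maps $h', h, 1_Y$. If $f$ is right minimal and $h'$ is a split epimorphism, then $f'$ is right minimal.
   Context: Modules are finite length left $\Lambda$-modules. A map $g: X\to Y$ is right minimal if there is no nonzero direct summand $X''$ of $X$ with $g(X'')=0$. *)

theory Defs
  imports "HOL-Algebra.Algebra"
begin

text \<open>Left modules over a (not necessarily commutative) ring L.
  The record type of HOL-Algebra modules is reused; only the additive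
  structure and the scalar multiplication of M are relevant.\<close>

definition lmodule :: "('a, 'z) ring_scheme \<Rightarrow> ('a, 'b) module \<Rightarrow> bool" where
  "lmodule L M \<longleftrightarrow> ring L \<and> abelian_group M \<and>
     (\<forall>a\<in>carrier L. \<forall>x\<in>carrier M. a \<odot>\<^bsub>M\<^esub> x \<in> carrier M) \<and>
     (\<forall>a\<in>carrier L. \<forall>b\<in>carrier L. \<forall>x\<in>carrier M.
        (a \<oplus>\<^bsub>L\<^esub> b) \<odot>\<^bsub>M\<^esub> x = a \<odot>\<^bsub>M\<^esub> x \<oplus>\<^bsub>M\<^esub> b \<odot>\<^bsub>M\<^esub> x) \<and>
     (\<forall>a\<in>carrier L. \<forall>x\<in>carrier M. \<forall>y\<in>carrier M.
        a \<odot>\<^bsub>M\<^esub> (x \<oplus>\<^bsub>M\<^esub> y) = a \<odot>\<^bsub>M\<^esub> x \<oplus>\<^bsub>M\<^esub> a \<odot>\<^bsub>M\<^esub> y) \<and>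
     (\<forall>a\<in>carrier L. \<forall>b\<in>carrier L. \<forall>x\<in>carrier M.
        (a \<otimes>\<^bsub>L\<^esub> b) \<odot>\<^bsub>M\<^esub> x = a \<odot>\<^bsub>M\<^esub> (b \<odot>\<^bsub>M\<^esub> x)) \<and>
     (\<forall>x\<in>carrier M. \<one>\<^bsub>L\<^esub> \<odot>\<^bsub>M\<^esub> x = x)"

definition lsubmodule :: "('a, 'z) ring_scheme \<Rightarrow> ('a, 'b) module \<Rightarrow> 'b set \<Rightarrow> bool" where
  "lsubmodule L M N \<longleftrightarrow> N \<subseteq> carrier M \<and> \<zero>\<^bsub>M\<^esub> \<in> N \<and>
     (\<forall>x\<in>N. \<forall>y\<in>N. x \<oplus>\<^bsub>M\<^esub> y \<in> N) \<and>
     (\<forall>x\<in>N. \<ominus>\<^bsub>M\<^esub> x \<in> N) \<and>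
     (\<forall>a\<in>carrier L. \<forall>x\<in>N. a \<odot>\<^bsub>M\<^esub> x \<in> N)"

definition submod :: "('a, 'b) module \<Rightarrow> 'b set \<Rightarrow> ('a, 'b) module" where
  "submod M N = M\<lparr>carrier := N\<rparr>"

definition finite_length :: "('a, 'z) ring_scheme \<Rightarrow> ('a, 'b) module \<Rightarrow> bool" where
  "finite_length L M \<longleftrightarrow> (\<exists>n::nat. \<forall>k::nat. \<forall>C :: nat \<Rightarrow> 'b set.
      (\<forall>i\<le>k. lsubmodule L M (C i)) \<and> (\<forall>i<k. C i \<subset> C (Suc i)) \<longrightarrow> k \<le> n)"

definition lin_map :: "('a, 'z) ring_scheme \<Rightarrow> ('a, 'b) module \<Rightarrow> ('a, 'c) module \<Rightarrow> ('b \<Rightarrow> 'c) \<Rightarrow> bool" where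
  "lin_map L M N f \<longleftrightarrow> f \<in> carrier M \<rightarrow> carrier N \<and>
     (\<forall>x\<in>carrier M. \<forall>y\<in>carrier M. f (x \<oplus>\<^bsub>M\<^esub> y) = f x \<oplus>\<^bsub>N\<^esub> f y) \<and>
     (\<forall>a\<in>carrier L. \<forall>x\<in>carrier M. f (a \<odot>\<^bsub>M\<^esub> x) = a \<odot>\<^bsub>N\<^esub> f x)"

definition epi :: "('a, 'z) ring_scheme \<Rightarrow> ('a, 'b) module \<Rightarrow> ('a, 'c) module \<Rightarrow> ('b \<Rightarrow> 'c) \<Rightarrow> bool" where
  "epi L M N f \<longleftrightarrow> lin_map L M N f \<and> f ` carrier M = carrier N"

definition split_epi :: "('a, 'z) ring_scheme \<Rightarrow> ('a, 'b) module \<Rightarrow> ('a, 'c) module \<Rightarrow> ('b \<Rightarrow> 'c) \<Rightarrow> bool" where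
  "split_epi L M N f \<longleftrightarrow> lin_map L M N f \<and>
     (\<exists>s. lin_map L N M s \<and> (\<forall>y\<in>carrier N. f (s y) = y))"

definition kernel_of :: "('a, 'b) module \<Rightarrow> ('a, 'c) module \<Rightarrow> ('b \<Rightarrow> 'c) \<Rightarrow> 'b set" where
  "kernel_of M N f = {x \<in> carrier M. f x = \<zero>\<^bsub>N\<^esub>}"

definition direct_summand :: "('a, 'z) ring_scheme \<Rightarrow> ('a, 'b) module \<Rightarrow> 'b set \<Rightarrow> bool" where
  "direct_summand L M N \<longleftrightarrow> lsubmodule L M N \<and>
     (\<exists>N'. lsubmodule L M N' \<and> N \<inter> N' = {\<zero>\<^bsub>M\<^esub>} \<and>
        (\<forall>x\<in>carrier M. \<exists>a\<in>N. \<exists>b\<in>N'. x = a \<oplus>\<^bsub>M\<^esub> b))"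

definition right_minimal :: "('a, 'z) ring_scheme \<Rightarrow> ('a, 'b) module \<Rightarrow> ('a, 'c) module \<Rightarrow> ('b \<Rightarrow> 'c) \<Rightarrow> bool" where
  "right_minimal L M Y g \<longleftrightarrow>
     \<not> (\<exists>N. direct_summand L M N \<and> N \<noteq> {\<zero>\<^bsub>M\<^esub>} \<and> (\<forall>x\<in>N. g x = \<zero>\<^bsub>Y\<^esub>))"

definition artinian_cring :: "'e ring \<Rightarrow> bool" where
  "artinian_cring S \<longleftrightarrow> cring S \<and>
     \<not> (\<exists>I :: nat \<Rightarrow> 'e set. \<forall>n. ideal (I n) S \<and> I (Suc n) \<subset> I n)"

definition artin_algebra_over :: "'e ring \<Rightarrow> ('e \<Rightarrow> 'a) \<Rightarrow> 'a ring \<Rightarrow> bool" where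
  "artin_algebra_over S phi L \<longleftrightarrow> artinian_cring S \<and> ring L \<and>
     phi \<in> ring_hom S L \<and>
     (\<forall>s\<in>carrier S. \<forall>x\<in>carrier L. phi s \<otimes>\<^bsub>L\<^esub> x = x \<otimes>\<^bsub>L\<^esub> phi s) \<and>
     (\<exists>G. finite G \<and> G \<subseteq> carrier L \<and>
        (\<forall>x\<in>carrier L. \<exists>c \<in> G \<rightarrow> carrier S.
            x = (\<Oplus>\<^bsub>L\<^esub> g\<in>G. phi (c g) \<otimes>\<^bsub>L\<^esub> g)))"

end

theory Submission
  imports Defs
begin

lemma add_hom_props:
  assumes G: "abelian_group G" and H: "abelian_group H"
    and f: "f \<in> carrier G \<rightarrow> carrier H"
    and add: "\<forall>x\<in>carrier G. \<forall>y\<in>carrier G. f (x \<oplus>\<^bsub>G\<^esub> y) = f x \<oplus>\<^bsub>H\<^esub> f y"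
  shows "f \<zero>\<^bsub>G\<^esub> = \<zero>\<^bsub>H\<^esub>" and "\<And>x. x \<in> carrier G \<Longrightarrow> f (\<ominus>\<^bsub>G\<^esub> x) = \<ominus>\<^bsub>H\<^esub> f x"
proof -
  have gh: "group_hom (add_monoid G) (add_monoid H) f"
    unfolding group_hom_def group_hom_axioms_def hom_def
    using G H f add abelian_group.a_group comm_group.axioms(2) abelian_group.a_comm_group
    by (auto intro!: comm_group.axioms(2) abelian_group.a_comm_group)
  show "f \<zero>\<^bsub>G\<^esub> = \<zero>\<^bsub>H\<^esub>" using group_hom.hom_one[OF gh] by simp
  show "\<And>x. x \<in> carrier G \<Longrightarrow> f (\<ominus>\<^bsub>G\<^esub> x) = \<ominus>\<^bsub>H\<^esub> f x"
    using group_hom.hom_inv[OF gh] by (simp add: a_inv_def)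
qed

theorem lemma7p2:
  fixes S :: "'e ring" and phi :: "'e \<Rightarrow> 'a" and L :: "'a ring"
    and XM :: "('a, 'b) module" and XM' :: "('a, 'c) module" and YM :: "('a, 'd) module"
    and f :: "'b \<Rightarrow> 'd" and f' :: "'c \<Rightarrow> 'd" and h :: "'b \<Rightarrow> 'c"
  assumes "artin_algebra_over S phi L"
    and "lmodule L XM" and "lmodule L XM'" and "lmodule L YM"
    and "finite_length L XM" and "finite_length L XM'" and "finite_length L YM"
    and "epi L XM YM f" and "epi L XM' YM f'"
    and "lin_map L XM XM' h"
    and "\<forall>x\<in>carrier XM. f x = f' (h x)"
    and "right_minimal L XM YM f"
    and "split_epi L (submod XM (kernel_of XM YM f)) (submod XM' (kernel_of XM' YM f')) h"
  shows "right_minimal L XM' YM f'"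
proof (rule ccontr)
  define K where "K = kernel_of XM YM f"
  define K' where "K' = kernel_of XM' YM f'"
  have AX: "abelian_group XM" and AX': "abelian_group XM'"
    using assms(2,3) by (auto simp: lmodule_def)
  have hlin: "h \<in> carrier XM \<rightarrow> carrier XM'"
    "\<forall>x\<in>carrier XM. \<forall>y\<in>carrier XM. h (x \<oplus>\<^bsub>XM\<^esub> y) = h x \<oplus>\<^bsub>XM'\<^esub> h y"
    "\<forall>a\<in>carrier L. \<forall>x\<in>carrier XM. h (a \<odot>\<^bsub>XM\<^esub> x) = a \<odot>\<^bsub>XM'\<^esub> h x"
    using assms(10) by (auto simp: lin_map_def)
  have h0: "h \<zero>\<^bsub>XM\<^esub> = \<zero>\<^bsub>XM'\<^esub>" and hneg: "\<And>x. x \<in> carrier XM \<Longrightarrow> h (\<ominus>\<^bsub>XM\<^esub> x) = \<ominus>\<^bsub>XM'\<^esub> h x"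
    using add_hom_props[OF AX AX' hlin(1,2)] by auto
  obtain s where slin: "lin_map L (submod XM' K') (submod XM K) s"
    and hs: "\<forall>y\<in>K'. h (s y) = y"
    using assms(13) unfolding split_epi_def K_def[symmetric] K'_def[symmetric]
    by (auto simp: submod_def)
  have sK: "\<And>y. y \<in> K' \<Longrightarrow> s y \<in> K"
    and sadd: "\<And>x y. x \<in> K' \<Longrightarrow> y \<in> K' \<Longrightarrow> s (x \<oplus>\<^bsub>XM'\<^esub> y) = s x \<oplus>\<^bsub>XM\<^esub> s y"
    and ssm: "\<And>a x. a \<in> carrier L \<Longrightarrow> x \<in> K' \<Longrightarrow> s (a \<odot>\<^bsub>XM'\<^esub> x) = a \<odot>\<^bsub>XM\<^esub> s x"
    using slin by (auto simp: lin_map_def submod_def)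
  have KX: "K \<subseteq> carrier XM" and K'X: "K' \<subseteq> carrier XM'"
    by (auto simp: K_def K'_def kernel_of_def)
  have fK: "\<And>x. x \<in> K \<Longrightarrow> f x = \<zero>\<^bsub>YM\<^esub>" by (auto simp: K_def kernel_of_def)
  assume "\<not> right_minimal L XM' YM f'"
  then obtain N' C' where N'sub: "lsubmodule L XM' N'" and C'sub: "lsubmodule L XM' C'"
    and NC: "N' \<inter> C' = {\<zero>\<^bsub>XM'\<^esub>}"
    and dec: "\<forall>x\<in>carrier XM'. \<exists>a\<in>N'. \<exists>b\<in>C'. x = a \<oplus>\<^bsub>XM'\<^esub> b"
    and N'nz: "N' \<noteq> {\<zero>\<^bsub>XM'\<^esub>}" and f'N': "\<forall>x\<in>N'. f' x = \<zero>\<^bsub>YM\<^esub>"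
    unfolding right_minimal_def direct_summand_def by blast
  have N'X: "N' \<subseteq> carrier XM'" using N'sub by (simp add: lsubmodule_def)
  have N'K': "N' \<subseteq> K'" using N'X f'N' by (auto simp: K'_def kernel_of_def)
  have zN': "\<zero>\<^bsub>XM'\<^esub> \<in> N'" using N'sub by (simp add: lsubmodule_def)
  have s0: "s \<zero>\<^bsub>XM'\<^esub> = \<zero>\<^bsub>XM\<^esub>"
  proof -
    have z: "\<zero>\<^bsub>XM'\<^esub> \<in> K'" using zN' N'K' by auto
    have "s \<zero>\<^bsub>XM'\<^esub> = s (\<zero>\<^bsub>XM'\<^esub> \<oplus>\<^bsub>XM'\<^esub> \<zero>\<^bsub>XM'\<^esub>)"
      using AX' by (simp add: abelian_monoid.l_zero abelian_monoid.zero_closed abelian_group.axioms(1))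
    also have "\<dots> = s \<zero>\<^bsub>XM'\<^esub> \<oplus>\<^bsub>XM\<^esub> s \<zero>\<^bsub>XM'\<^esub>" using sadd[OF z z] .
    finally have e: "s \<zero>\<^bsub>XM'\<^esub> \<oplus>\<^bsub>XM\<^esub> s \<zero>\<^bsub>XM'\<^esub> = s \<zero>\<^bsub>XM'\<^esub> \<oplus>\<^bsub>XM\<^esub> \<zero>\<^bsub>XM\<^esub>"
      using sK[OF z] KX AX by (simp add: abelian_monoid.r_zero abelian_group.axioms(1) subsetD)
    interpret X: abelian_group XM by (rule AX)
    show ?thesis using e sK[OF z] KX by (auto simp: X.add.l_cancel)
  qed
  define N where "N = s ` N'"
  define C where "C = {x \<in> carrier XM. h x \<in> C'}"
  have NK: "N \<subseteq> K" using sK N'K' by (auto simp: N_def)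
  have sneg: "\<And>y. y \<in> N' \<Longrightarrow> s (\<ominus>\<^bsub>XM'\<^esub> y) = \<ominus>\<^bsub>XM\<^esub> s y"
  proof -
    fix y assume y: "y \<in> N'"
    have ny: "\<ominus>\<^bsub>XM'\<^esub> y \<in> N'" using N'sub y by (simp add: lsubmodule_def)
    have "s (\<ominus>\<^bsub>XM'\<^esub> y) \<oplus>\<^bsub>XM\<^esub> s y = s (\<ominus>\<^bsub>XM'\<^esub> y \<oplus>\<^bsub>XM'\<^esub> y)"
      using ny y N'K' by (intro sadd[symmetric]) auto
    also have "\<dots> = \<zero>\<^bsub>XM\<^esub>" using abelian_group.l_neg[OF AX'] y N'X s0 by auto
    finally have e: "s (\<ominus>\<^bsub>XM'\<^esub> y) \<oplus>\<^bsub>XM\<^esub> s y = \<zero>\<^bsub>XM\<^esub>" .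
    have c1: "s (\<ominus>\<^bsub>XM'\<^esub> y) \<in> carrier XM" "s y \<in> carrier XM"
      using sK ny y N'K' KX by auto
    show "s (\<ominus>\<^bsub>XM'\<^esub> y) = \<ominus>\<^bsub>XM\<^esub> s y"
      using abelian_group.minus_equality[OF AX e c1(2) c1(1)] by simp
  qed
  have Nsub: "lsubmodule L XM N"
    unfolding lsubmodule_def
  proof (intro conjI ballI)
    show "N \<subseteq> carrier XM" using NK KX by auto
    show "\<zero>\<^bsub>XM\<^esub> \<in> N" using zN' s0 N_def by force
  next
    fix x y assume "x \<in> N" "y \<in> N"
    then obtain a b where "a \<in> N'" "b \<in> N'" "x = s a" "y = s b" by (auto simp: N_def)
    moreover have "a \<oplus>\<^bsub>XM'\<^esub> b \<in> N'" using N'sub calculation by (simp add: lsubmodule_def)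
    ultimately show "x \<oplus>\<^bsub>XM\<^esub> y \<in> N" using sadd N'K' unfolding N_def
      by (metis image_eqI subsetD)
  next
    fix x assume "x \<in> N"
    then obtain a where "a \<in> N'" "x = s a" by (auto simp: N_def)
    moreover have "\<ominus>\<^bsub>XM'\<^esub> a \<in> N'" using N'sub calculation by (simp add: lsubmodule_def)
    ultimately show "\<ominus>\<^bsub>XM\<^esub> x \<in> N" using sneg unfolding N_def by (metis image_eqI)
  next
    fix c x assume c: "c \<in> carrier L" and "x \<in> N"
    then obtain a where "a \<in> N'" "x = s a" by (auto simp: N_def)
    moreover have "c \<odot>\<^bsub>XM'\<^esub> a \<in> N'" using N'sub calculation c by (simp add: lsubmodule_def)
    ultimately show "c \<odot>\<^bsub>XM\<^esub> x \<in> N" using ssm c N'K' unfolding N_def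
      by (metis image_eqI subsetD)
  qed
  have XMsc: "\<forall>a\<in>carrier L. \<forall>x\<in>carrier XM. a \<odot>\<^bsub>XM\<^esub> x \<in> carrier XM"
    using assms(2) by (simp add: lmodule_def)
  interpret X: abelian_group XM by (rule AX)
  interpret X': abelian_group XM' by (rule AX')
  have C'p: "C' \<subseteq> carrier XM'" "\<zero>\<^bsub>XM'\<^esub> \<in> C'"
     "\<And>x y. x\<in>C' \<Longrightarrow> y\<in>C' \<Longrightarrow> x \<oplus>\<^bsub>XM'\<^esub> y \<in> C'"
     "\<And>x. x\<in>C' \<Longrightarrow> \<ominus>\<^bsub>XM'\<^esub> x \<in> C'"
     "\<And>a x. a\<in>carrier L \<Longrightarrow> x\<in>C' \<Longrightarrow> a \<odot>\<^bsub>XM'\<^esub> x \<in> C'"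
    using C'sub unfolding lsubmodule_def by blast+
  have Csub: "lsubmodule L XM C"
    unfolding lsubmodule_def
  proof (intro conjI ballI)
    show "C \<subseteq> carrier XM" by (auto simp: C_def)
    show "\<zero>\<^bsub>XM\<^esub> \<in> C" using h0 C'p(2) by (simp add: C_def)
  next
    fix x y assume "x \<in> C" "y \<in> C"
    then show "x \<oplus>\<^bsub>XM\<^esub> y \<in> C" using hlin(2) C'p(3) by (simp add: C_def)
  next
    fix x assume "x \<in> C"
    then show "\<ominus>\<^bsub>XM\<^esub> x \<in> C" using hneg C'p(4) by (simp add: C_def)
  next
    fix a x assume "a \<in> carrier L" "x \<in> C"
    then show "a \<odot>\<^bsub>XM\<^esub> x \<in> C" using hlin(3) C'p(5) XMsc by (simp add: C_def)
  qed
  have NC0: "N \<inter> C = {\<zero>\<^bsub>XM\<^esub>}"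
  proof
    show "N \<inter> C \<subseteq> {\<zero>\<^bsub>XM\<^esub>}"
    proof
      fix x assume "x \<in> N \<inter> C"
      then obtain a where a: "a \<in> N'" "x = s a" "h x \<in> C'" by (auto simp: N_def C_def)
      then have "h x = a" using hs N'K' by auto
      then have "a = \<zero>\<^bsub>XM'\<^esub>" using a NC by auto
      then show "x \<in> {\<zero>\<^bsub>XM\<^esub>}" using a s0 by simp
    qed
    show "{\<zero>\<^bsub>XM\<^esub>} \<subseteq> N \<inter> C" using Nsub Csub by (simp add: lsubmodule_def)
  qed
  have decX: "\<forall>x\<in>carrier XM. \<exists>a\<in>N. \<exists>b\<in>C. x = a \<oplus>\<^bsub>XM\<^esub> b"
  proof
    fix x assume x: "x \<in> carrier XM"
    then have hx: "h x \<in> carrier XM'" using hlin by auto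
    obtain a b where ab: "a \<in> N'" "b \<in> C'" "h x = a \<oplus>\<^bsub>XM'\<^esub> b" using dec hx by blast
    have aX: "a \<in> carrier XM'" and bX: "b \<in> carrier XM'"
      using ab N'X C'sub by (auto simp: lsubmodule_def)
    have saX: "s a \<in> carrier XM" using sK ab N'K' KX by auto
    define c where "c = x \<oplus>\<^bsub>XM\<^esub> \<ominus>\<^bsub>XM\<^esub> s a"
    have nsa: "\<ominus>\<^bsub>XM\<^esub> s a \<in> carrier XM" using saX by simp
    have cX: "c \<in> carrier XM" using x nsa by (simp add: c_def)
    have "h c = h x \<oplus>\<^bsub>XM'\<^esub> h (\<ominus>\<^bsub>XM\<^esub> s a)"
      using hlin(2) x nsa by (simp add: c_def)
    also have "\<dots> = h x \<oplus>\<^bsub>XM'\<^esub> \<ominus>\<^bsub>XM'\<^esub> a" using hneg[OF saX] hs ab(1) N'K' by auto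
    also have "\<dots> = (b \<oplus>\<^bsub>XM'\<^esub> a) \<oplus>\<^bsub>XM'\<^esub> \<ominus>\<^bsub>XM'\<^esub> a"
      using aX bX ab(3) X'.a_comm by simp
    also have "\<dots> = b \<oplus>\<^bsub>XM'\<^esub> (a \<oplus>\<^bsub>XM'\<^esub> \<ominus>\<^bsub>XM'\<^esub> a)"
      using aX bX by (simp add: X'.a_assoc)
    also have "\<dots> = b" using aX bX by (simp add: X'.r_neg)
    finally have "c \<in> C" using cX ab by (simp add: C_def)
    moreover have "x = s a \<oplus>\<^bsub>XM\<^esub> c" using x saX
      unfolding c_def using X.r_neg2[OF saX x] X.a_comm[OF x nsa] by simp
    moreover have "s a \<in> N" using ab by (simp add: N_def)
    ultimately show "\<exists>a\<in>N. \<exists>b\<in>C. x = a \<oplus>\<^bsub>XM\<^esub> b" by blast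
  qed
  have Nnz: "N \<noteq> {\<zero>\<^bsub>XM\<^esub>}"
  proof
    assume e: "N = {\<zero>\<^bsub>XM\<^esub>}"
    obtain y where y: "y \<in> N'" "y \<noteq> \<zero>\<^bsub>XM'\<^esub>" using N'nz zN' by blast
    have "s y = \<zero>\<^bsub>XM\<^esub>" using e y by (auto simp: N_def)
    then have "h (s y) = \<zero>\<^bsub>XM'\<^esub>" using h0 by simp
    then show False using hs y N'K' by auto
  qed
  have "direct_summand L XM N" unfolding direct_summand_def using Nsub Csub NC0 decX by blast
  moreover have "\<forall>x\<in>N. f x = \<zero>\<^bsub>YM\<^esub>" using NK fK by auto
  ultimately show False using assms(12) Nnz unfolding right_minimal_def by blast
qed

end
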